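(* Let $D=(V,A)$ be a digraph with weight $w\in\{0,1\}^A$ such that $D$ has a dicut and the minimum weight of a dicut is $\tau\ge2$. Let $e\in A$ with $w_e=1$. If there exists $\emptyset\neq U\subsetneq V$ with $\delta^+_D(U)=\{e\}$ and $w(\delta^-_D(U))=0$, then $e$ is not contained in any dicut of weight exactly $\tau$.
   Context: Digraphs are finite and loopless; parallel arcs allowed. $\delta^+_D(U)$ / $\delta^-_D(U)$ denote arcs leaving/entering $U$. A dicut is an arc set of the form $\delta^-_D(W)$ with $\emptyset\neq W\subsetneq V$ and $\delta^+_D(W)=\emptyset$ (equivalently $\delta^+_D(V\setminus W)$ with no arc entering $V\setminus W$). For an arc set $B$, $w(B)=\sum_{e\in B}w_e$. *)

theory Defs
  imports Main
begin

definition digraph :: "'v set \<Rightarrow> 'e set \<Rightarrow> ('e \<Rightarrow> 'v) \<Rightarrow> ('e \<Rightarrow> 'v) \<Rightarrow> bool" where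
  "digraph V A tail head \<longleftrightarrow> finite V \<and> finite A \<and>
     (\<forall>a\<in>A. tail a \<in> V \<and> head a \<in> V \<and> tail a \<noteq> head a)"

definition out_arcs :: "'e set \<Rightarrow> ('e \<Rightarrow> 'v) \<Rightarrow> ('e \<Rightarrow> 'v) \<Rightarrow> 'v set \<Rightarrow> 'e set" where
  "out_arcs A tail head U = {a\<in>A. tail a \<in> U \<and> head a \<notin> U}"

definition in_arcs :: "'e set \<Rightarrow> ('e \<Rightarrow> 'v) \<Rightarrow> ('e \<Rightarrow> 'v) \<Rightarrow> 'v set \<Rightarrow> 'e set" where
  "in_arcs A tail head U = {a\<in>A. head a \<in> U \<and> tail a \<notin> U}"

definition is_dicut :: "'v set \<Rightarrow> 'e set \<Rightarrow> ('e \<Rightarrow> 'v) \<Rightarrow> ('e \<Rightarrow> 'v) \<Rightarrow> 'e set \<Rightarrow> bool" where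
  "is_dicut V A tail head B \<longleftrightarrow>
     (\<exists>W. W \<noteq> {} \<and> W \<subset> V \<and> out_arcs A tail head W = {} \<and> B = in_arcs A tail head W)"

definition wt :: "('e \<Rightarrow> nat) \<Rightarrow> 'e set \<Rightarrow> nat" where
  "wt w B = (\<Sum>e\<in>B. w e)"

end

theory Submission
  imports Defs
begin

theorem lemma2:
  fixes V :: "'v set" and A :: "'e set" and tail head :: "'e \<Rightarrow> 'v"
    and w :: "'e \<Rightarrow> nat" and \<tau> :: nat and e :: 'e
  assumes "digraph V A tail head"
    and "\<forall>a\<in>A. w a \<in> {0, 1}"
    and "\<exists>B. is_dicut V A tail head B"
    and "\<tau> = Min {wt w B | B. is_dicut V A tail head B}"
    and "\<tau> \<ge> 2"
    and "e \<in> A" and "w e = 1"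
    and "\<exists>U. U \<noteq> {} \<and> U \<subset> V \<and> out_arcs A tail head U = {e} \<and> wt w (in_arcs A tail head U) = 0"
  shows "\<not> (\<exists>B. is_dicut V A tail head B \<and> e \<in> B \<and> wt w B = \<tau>)"
proof
  assume "\<exists>B. is_dicut V A tail head B \<and> e \<in> B \<and> wt w B = \<tau>"
  then obtain W where W: "W \<noteq> {}" "W \<subset> V" "out_arcs A tail head W = {}"
     and eB: "e \<in> in_arcs A tail head W" and wB: "wt w (in_arcs A tail head W) = \<tau>"
    unfolding is_dicut_def by blast
  obtain U where U: "U \<noteq> {}" "U \<subset> V" "out_arcs A tail head U = {e}"
     and wU: "wt w (in_arcs A tail head U) = 0" using assms(8) by blast
  have fA: "finite A" and ends: "\<forall>a\<in>A. tail a \<in> V \<and> head a \<in> V"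
    using assms(1) unfolding digraph_def by auto
  have eW: "head e \<in> W" "tail e \<notin> W" using eB unfolding in_arcs_def by auto
  have eU: "tail e \<in> U" "head e \<notin> U" using U(3) unfolding out_arcs_def by auto
  have minle: "\<tau> \<le> wt w C" if "is_dicut V A tail head C" for C
  proof -
    have C: "C \<subseteq> A" using that unfolding is_dicut_def in_arcs_def by auto
    have "{wt w B | B. is_dicut V A tail head B} \<subseteq> wt w ` Pow A"
      unfolding is_dicut_def in_arcs_def by auto
    hence "finite {wt w B | B. is_dicut V A tail head B}"
      using fA finite_subset by blast
    thus ?thesis using assms(4) that by (auto intro: Min_le)
  qed
  have fin: "finite (in_arcs A tail head X)" for X
    using fA unfolding in_arcs_def by auto
  have wWe: "wt w (in_arcs A tail head W - {e}) = \<tau> - 1"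
    using wB eB assms(7) fin[of W] unfolding wt_def
    by (simp add: sum_diff1_nat)
  have bound: "wt w (in_arcs A tail head X) < \<tau>"
    if sub: "in_arcs A tail head X \<subseteq> (in_arcs A tail head W - {e}) \<union> in_arcs A tail head U" for X
  proof -
    have "wt w (in_arcs A tail head X) \<le> wt w ((in_arcs A tail head W - {e}) \<union> in_arcs A tail head U)"
      unfolding wt_def using sub fin by (intro sum_mono2) auto
    also have "\<dots> \<le> wt w (in_arcs A tail head W - {e}) + wt w (in_arcs A tail head U)"
      unfolding wt_def using fin[of W] fin[of U] by (simp add: sum_Un_nat)
    finally show ?thesis using wWe wU assms(5) by simp
  qed
  show False
  proof (cases "W \<union> U = V")
    case False
    let ?X = "W \<union> U"
    have d: "is_dicut V A tail head (in_arcs A tail head ?X)"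
      unfolding is_dicut_def
    proof (intro exI[of _ ?X] conjI)
      show "?X \<noteq> {}" using W by auto
      show "?X \<subset> V" using W U False by auto
      show "out_arcs A tail head ?X = {}"
      proof -
        { fix a assume a: "a \<in> out_arcs A tail head ?X"
          have "a \<notin> out_arcs A tail head W" using W(3) by auto
          hence "a \<in> out_arcs A tail head U" using a unfolding out_arcs_def by auto
          hence "a = e" using U(3) by auto
          hence False using a eW unfolding out_arcs_def by auto }
        thus ?thesis by auto
      qed
    qed simp
    have "in_arcs A tail head ?X \<subseteq> (in_arcs A tail head W - {e}) \<union> in_arcs A tail head U"
      using eU unfolding in_arcs_def by auto
    thus False using bound minle[OF d] by (meson leD)
  next
    case True
    show False
    proof (cases "W \<inter> U = {}")
      case False
      let ?X = "W \<inter> U"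
      have d: "is_dicut V A tail head (in_arcs A tail head ?X)"
        unfolding is_dicut_def
      proof (intro exI[of _ ?X] conjI)
        show "?X \<noteq> {}" using False by auto
        show "?X \<subset> V" using W by auto
        show "out_arcs A tail head ?X = {}"
        proof -
          { fix a assume a: "a \<in> out_arcs A tail head ?X"
            have "a \<notin> out_arcs A tail head W" using W(3) by auto
            hence "a \<in> out_arcs A tail head U" using a unfolding out_arcs_def by auto
            hence "a = e" using U(3) by auto
            hence False using a eW unfolding out_arcs_def by auto }
          thus ?thesis by auto
        qed
      qed simp
      have "in_arcs A tail head ?X \<subseteq> (in_arcs A tail head W - {e}) \<union> in_arcs A tail head U"
        using eU unfolding in_arcs_def by auto
      thus False using bound minle[OF d] by (meson leD)
    next
      case disj: True
      have "in_arcs A tail head W \<subseteq> out_arcs A tail head U"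
        using True disj ends unfolding in_arcs_def out_arcs_def by blast
      hence "in_arcs A tail head W = {e}" using U(3) eB by auto
      thus False using wB assms(5,7) by (simp add: wt_def)
    qed
  qed
qed

end
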